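(* Let $G$ be a countable group which is icc or torsion-free, and let $A$ be a finite set. Then every strongly irreducible subshift $Z\subseteq A^G$ containing a non-constant element is essentially free.
   Context: $A^G$ has the product topology and the action $(g\cdot z)(h)=z(hg)$; a subshift is a non-empty closed $G$-invariant subset. For finite $D\subseteq G$, two sets $E_1,E_2\subseteq G$ are $D$-apart if $DE_1\cap DE_2=\emptyset$. A subshift $Z$ is strongly irreducible if there is a finite $D\subseteq G$ such that for all finite $E_1,E_2\subseteq G$ that are $D$-apart and all $z_1,z_2\in Z$, there is $x\in Z$ with $x|_{E_i}=z_i|_{E_i}$ for $i=1,2$. A flow is essentially free if for every $g\neq e$ the set of points fixed by $g$ has empty interior. A group is icc if every non-identity element has infinite conjugacy class. *)

theory Defs
  imports "HOL-Analysis.Analysis" "HOL-Algebra.Coset"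
begin

definition shift_act :: "('g, 'm) monoid_scheme \<Rightarrow> 'g \<Rightarrow> ('g \<Rightarrow> 'a) \<Rightarrow> ('g \<Rightarrow> 'a)" where
  "shift_act G g z = (\<lambda>h\<in>carrier G. z (h \<otimes>\<^bsub>G\<^esub> g))"

definition full_shift_top :: "('g, 'm) monoid_scheme \<Rightarrow> 'a set \<Rightarrow> ('g \<Rightarrow> 'a) topology" where
  "full_shift_top G A = product_topology (\<lambda>_. discrete_topology A) (carrier G)"

definition subshift :: "('g, 'm) monoid_scheme \<Rightarrow> 'a set \<Rightarrow> ('g \<Rightarrow> 'a) set \<Rightarrow> bool" where
  "subshift G A Z \<longleftrightarrow> Z \<noteq> {} \<and> Z \<subseteq> (\<Pi>\<^sub>E h\<in>carrier G. A) \<and>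
     closedin (full_shift_top G A) Z \<and>
     (\<forall>g\<in>carrier G. \<forall>z\<in>Z. shift_act G g z \<in> Z)"

definition strongly_irreducible :: "('g, 'm) monoid_scheme \<Rightarrow> ('g \<Rightarrow> 'a) set \<Rightarrow> bool" where
  "strongly_irreducible G Z \<longleftrightarrow>
     (\<exists>D. finite D \<and> D \<subseteq> carrier G \<and>
       (\<forall>E1 E2. finite E1 \<and> finite E2 \<and> E1 \<subseteq> carrier G \<and> E2 \<subseteq> carrier G \<and>
          (D <#>\<^bsub>G\<^esub> E1) \<inter> (D <#>\<^bsub>G\<^esub> E2) = {} \<longrightarrow>
          (\<forall>z1\<in>Z. \<forall>z2\<in>Z. \<exists>x\<in>Z. (\<forall>h\<in>E1. x h = z1 h) \<and> (\<forall>h\<in>E2. x h = z2 h))))"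

definition essentially_free :: "('g, 'm) monoid_scheme \<Rightarrow> 'a set \<Rightarrow> ('g \<Rightarrow> 'a) set \<Rightarrow> bool" where
  "essentially_free G A Z \<longleftrightarrow>
     (\<forall>g\<in>carrier G. g \<noteq> \<one>\<^bsub>G\<^esub> \<longrightarrow>
        (subtopology (full_shift_top G A) Z) interior_of {z\<in>Z. shift_act G g z = z} = {})"

definition icc_group :: "('g, 'm) monoid_scheme \<Rightarrow> bool" where
  "icc_group G \<longleftrightarrow> (\<forall>g\<in>carrier G. g \<noteq> \<one>\<^bsub>G\<^esub> \<longrightarrow>
     infinite {k \<otimes>\<^bsub>G\<^esub> g \<otimes>\<^bsub>G\<^esub> inv\<^bsub>G\<^esub> k | k. k \<in> carrier G})"

definition torsion_free_group :: "('g, 'm) monoid_scheme \<Rightarrow> bool" where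
  "torsion_free_group G \<longleftrightarrow> (\<forall>g\<in>carrier G. g \<noteq> \<one>\<^bsub>G\<^esub> \<longrightarrow>
     (\<forall>n::nat. n > 0 \<longrightarrow> g [^]\<^bsub>G\<^esub> n \<noteq> \<one>\<^bsub>G\<^esub>))"

end

theory Submission
  imports Defs
begin

lemma cyl_lemma:
  assumes sub: "subshift G A Z"
    and z0: "z0 \<in> (subtopology (full_shift_top G A) Z) interior_of S"
  obtains F where "finite F" "F \<subseteq> carrier G" "z0 \<in> Z"
    "\<And>x. x \<in> Z \<Longrightarrow> (\<forall>f\<in>F. x f = z0 f) \<Longrightarrow> x \<in> S"
proof -
  obtain T where T: "openin (subtopology (full_shift_top G A) Z) T" "z0 \<in> T" "T \<subseteq> S"
    using z0 unfolding interior_of_def by blast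
  then obtain V where V: "openin (full_shift_top G A) V" "T = V \<inter> Z"
    by (auto simp: openin_subtopology)
  have "z0 \<in> V" using T V by auto
  then obtain U where U: "finite {i \<in> carrier G. U i \<noteq> topspace (discrete_topology A)}"
    "\<forall>i \<in> carrier G. openin (discrete_topology A) (U i)" "z0 \<in> Pi\<^sub>E (carrier G) U"
    "Pi\<^sub>E (carrier G) U \<subseteq> V"
    using V(1) unfolding full_shift_top_def openin_product_topology_alt by blast
  define F where "F = {i \<in> carrier G. U i \<noteq> topspace (discrete_topology A)}"
  have ZA: "Z \<subseteq> (\<Pi>\<^sub>E h\<in>carrier G. A)" using sub by (simp add: subshift_def)
  show ?thesis
  proof
    show "finite F" using U F_def by simp
    show "F \<subseteq> carrier G" by (auto simp: F_def)
    show "z0 \<in> Z" using T V by auto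
    fix x assume x: "x \<in> Z" "\<forall>f\<in>F. x f = z0 f"
    have "x \<in> Pi\<^sub>E (carrier G) U"
    proof -
      have "x i \<in> U i" if "i \<in> carrier G" for i
      proof (cases "i \<in> F")
        case True then show ?thesis using x U(3) that by (auto simp: PiE_iff)
      next
        case False then show ?thesis using x ZA that by (auto simp: F_def PiE_iff)
      qed
      moreover have "x \<in> extensional (carrier G)" using x ZA by (auto simp: PiE_iff)
      ultimately show ?thesis by (auto simp: PiE_iff)
    qed
    then show "x \<in> S" using U(4) V T x by auto
  qed
qed

lemma disj_lemma:
  assumes G: "group G" and D: "D \<subseteq> carrier G" and E: "E1 \<subseteq> carrier G" "E2 \<subseteq> carrier G"
    and no: "\<And>d1 d2 e1 e2. d1 \<in> D \<Longrightarrow> d2 \<in> D \<Longrightarrow> e1 \<in> E1 \<Longrightarrow> e2 \<in> E2 \<Longrightarrow>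
               d1 \<otimes>\<^bsub>G\<^esub> e1 \<noteq> d2 \<otimes>\<^bsub>G\<^esub> e2"
  shows "(D <#>\<^bsub>G\<^esub> E1) \<inter> (D <#>\<^bsub>G\<^esub> E2) = {}"
  using no by (auto simp: set_mult_def)

lemma core_lemma:
  fixes G (structure)
  assumes G: "group G"
    and ZA: "Z \<subseteq> (\<Pi>\<^sub>E h\<in>carrier G. A)"
    and inv: "\<forall>g\<in>carrier G. \<forall>z\<in>Z. shift_act G g z \<in> Z"
    and D: "D \<subseteq> carrier G"
    and SI: "\<forall>E1 E2. finite E1 \<and> finite E2 \<and> E1 \<subseteq> carrier G \<and> E2 \<subseteq> carrier G \<and>
          (D <#>\<^bsub>G\<^esub> E1) \<inter> (D <#>\<^bsub>G\<^esub> E2) = {} \<longrightarrow>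
          (\<forall>z1\<in>Z. \<forall>z2\<in>Z. \<exists>x\<in>Z. (\<forall>h\<in>E1. x h = z1 h) \<and> (\<forall>h\<in>E2. x h = z2 h))"
    and F: "finite F" "F \<subseteq> carrier G" and z0: "z0 \<in> Z"
    and fixd: "\<And>x. x \<in> Z \<Longrightarrow> (\<forall>f\<in>F. x f = z0 f) \<Longrightarrow> x (h \<otimes>\<^bsub>G\<^esub> m) = x h"
    and z1: "z1 \<in> Z" "a \<in> carrier G" "b \<in> carrier G" "z1 a \<noteq> z1 b"
    and hm: "h \<in> carrier G" "m \<in> carrier G"
    and d1: "(D <#>\<^bsub>G\<^esub> {h}) \<inter> (D <#>\<^bsub>G\<^esub> {h \<otimes>\<^bsub>G\<^esub> m}) = {}"
    and d2: "(D <#>\<^bsub>G\<^esub> F) \<inter> (D <#>\<^bsub>G\<^esub> {h, h \<otimes>\<^bsub>G\<^esub> m}) = {}"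
  shows False
proof -
  interpret group G by (rule G)
  have hm': "h \<otimes> m \<in> carrier G" using hm by simp
  define y1 where "y1 = shift_act G (inv h \<otimes> a) z1"
  define y2 where "y2 = shift_act G (inv (h \<otimes> m) \<otimes> b) z1"
  have y1Z: "y1 \<in> Z" using inv z1 hm unfolding y1_def by simp
  have y2Z: "y2 \<in> Z" using inv z1 hm hm' unfolding y2_def by simp
  have y1h: "y1 h = z1 a" unfolding y1_def shift_act_def using hm z1
    by (simp add: m_assoc[symmetric])
  have y2h: "y2 (h \<otimes> m) = z1 b" unfolding y2_def shift_act_def using hm hm' z1
    by (simp add: m_assoc[symmetric])
  obtain y where y: "y \<in> Z" "y h = z1 a" "y (h \<otimes> m) = z1 b"
    using SI[rule_format, of "{h}" "{h \<otimes> m}" y1 y2] d1 hm hm' y1Z y2Z y1h y2h by auto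
  obtain x where x: "x \<in> Z" "\<forall>f\<in>F. x f = z0 f" "x h = y h" "x (h \<otimes> m) = y (h \<otimes> m)"
    using SI[rule_format, of F "{h, h \<otimes> m}" z0 y] d2 F hm hm' y z0 by auto
  have "x (h \<otimes> m) = x h" using fixd x by blast
  then show False using x y z1 by simp
qed

lemma sep_lemma:
  fixes G (structure)
  assumes G: "group G" and D: "D \<subseteq> carrier G" and F: "F \<subseteq> carrier G"
    and hm: "h \<in> carrier G" "m \<in> carrier G"
    and c1: "h \<otimes> m \<otimes> inv h \<notin> (\<lambda>(d1,d2). inv d2 \<otimes> d1) ` (D \<times> D)"
    and c2: "h \<notin> (\<lambda>((d1,d2),f). inv d2 \<otimes> d1 \<otimes> f) ` ((D \<times> D) \<times> F)"
    and c3: "h \<otimes> m \<notin> (\<lambda>((d1,d2),f). inv d2 \<otimes> d1 \<otimes> f) ` ((D \<times> D) \<times> F)"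
  shows "(D <#> {h}) \<inter> (D <#> {h \<otimes> m}) = {}"
    "(D <#> F) \<inter> (D <#> {h, h \<otimes> m}) = {}"
proof -
  interpret group G by (rule G)
  have A: "e = inv d2 \<otimes> d1 \<otimes> f" if "d1 \<in> carrier G" "d2 \<in> carrier G" "f \<in> carrier G"
     "e \<in> carrier G" "d1 \<otimes> f = d2 \<otimes> e" for d1 d2 e f
    using that inv_solve_left[of e d2 "d1 \<otimes> f"] by (simp add: m_assoc)
  show "(D <#> {h}) \<inter> (D <#> {h \<otimes> m}) = {}"
  proof (rule disj_lemma[OF G D])
    fix d1 d2 e1 e2 assume as: "d1 \<in> D" "d2 \<in> D" "e1 \<in> {h}" "e2 \<in> {h \<otimes> m}"
    show "d1 \<otimes> e1 \<noteq> d2 \<otimes> e2"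
    proof
      assume eq: "d1 \<otimes> e1 = d2 \<otimes> e2"
      have dc: "d1 \<in> carrier G" "d2 \<in> carrier G" using as D by auto
      have "h \<otimes> m = inv d2 \<otimes> d1 \<otimes> h" using A[of d1 d2 h "h \<otimes> m"] dc hm as eq by simp
      then have "h \<otimes> m \<otimes> inv h = inv d2 \<otimes> d1" using dc hm by (simp add: m_assoc)
      then show False using c1 as by auto
    qed
  qed (use hm in auto)
  show "(D <#> F) \<inter> (D <#> {h, h \<otimes> m}) = {}"
  proof (rule disj_lemma[OF G D F])
    fix d1 d2 e1 e2 assume as: "d1 \<in> D" "d2 \<in> D" "e1 \<in> F" "e2 \<in> {h, h \<otimes> m}"
    show "d1 \<otimes> e1 \<noteq> d2 \<otimes> e2"
    proof
      assume eq: "d1 \<otimes> e1 = d2 \<otimes> e2"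
      have dc: "d1 \<in> carrier G" "d2 \<in> carrier G" "e1 \<in> carrier G" using as D F by auto
      have "e2 \<in> carrier G" using as hm by auto
      then have "e2 = inv d2 \<otimes> d1 \<otimes> e1" using A[of d1 d2 e1 e2] dc eq by simp
      then have "e2 \<in> (\<lambda>((d1,d2),f). inv d2 \<otimes> d1 \<otimes> f) ` ((D \<times> D) \<times> F)"
        using as by (intro image_eqI[of _ _ "((d1,d2),e1)"]) auto
      then show False using c2 c3 as(4) by (metis empty_iff insert_iff)
    qed
  qed (use hm in auto)
qed

lemma pow_inj:
  fixes G (structure)
  assumes G: "group G" and tf: "torsion_free_group G" and g: "g \<in> carrier G" "g \<noteq> \<one>"
  shows "inj (\<lambda>j::nat. g [^] j)"
proof -
  interpret group G by (rule G)
  have *: False if "i < j" "g [^] i = g [^] j" for i j :: nat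
  proof -
    have "g [^] i \<otimes> g [^] (j - i) = g [^] i \<otimes> \<one>"
      using that g nat_pow_mult[of g i "j-i"] by simp
    then have "g [^] (j - i) = \<one>" using g by simp
    then show False using tf g that unfolding torsion_free_group_def by auto
  qed
  show ?thesis
    by (rule injI) (metis * linorder_neqE_nat)
qed

lemma exists_hm:
  fixes G (structure)
  assumes G: "group G" and cases: "icc_group G \<or> torsion_free_group G"
    and g: "g \<in> carrier G" "g \<noteq> \<one>"
    and S: "finite S" and T: "finite T" and TC: "T \<subseteq> carrier G"
  obtains h n where "h \<in> carrier G" "h \<otimes> g [^] (n::nat) \<otimes> inv h \<notin> S" "h \<notin> T"
    "h \<otimes> g [^] n \<notin> T"
proof -
  interpret group G by (rule G)
  show ?thesis
  proof (cases "icc_group G")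
    case True
    define B where "B = T \<union> (\<lambda>t. t \<otimes> inv g) ` T"
    have fB: "finite B" using T by (simp add: B_def)
    have "\<exists>h\<in>carrier G. h \<otimes> g \<otimes> inv h \<notin> S \<and> h \<notin> B"
    proof (rule ccontr)
      assume "\<not> ?thesis"
      then have "{k \<otimes> g \<otimes> inv k | k. k \<in> carrier G} \<subseteq> S \<union> (\<lambda>k. k \<otimes> g \<otimes> inv k) ` B"
        by blast
      then have "finite {k \<otimes> g \<otimes> inv k | k. k \<in> carrier G}"
        using S fB by (meson finite_UnI finite_imageI finite_subset)
      then show False using True g unfolding icc_group_def by blast
    qed
    then obtain h where h: "h \<in> carrier G" "h \<otimes> g \<otimes> inv h \<notin> S" "h \<notin> B" by blast
    have "h \<otimes> g \<notin> T"
    proof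
      assume "h \<otimes> g \<in> T"
      then have "h \<otimes> g \<otimes> inv g \<in> B" unfolding B_def by blast
      then show False using h g by (simp add: m_assoc)
    qed
    then show ?thesis using that[of h 1] h g by (simp add: B_def)
  next
    case False
    then have tf: "torsion_free_group G" using cases by simp
    have inj: "inj (\<lambda>j::nat. g [^] j)" by (rule pow_inj[OF G tf g])
    have fS: "finite {j::nat. g [^] j \<in> S}"
      using finite_vimageI[OF S inj] by (simp add: vimage_def)
    have "\<exists>n. n \<notin> {j::nat. g [^] j \<in> S}" using fS by (meson ex_new_if_finite infinite_UNIV_nat)
    then obtain n :: nat where n: "g [^] n \<notin> S" by blast
    have fT1: "finite {j::nat. g [^] j \<in> T}"
      using finite_vimageI[OF T inj] by (simp add: vimage_def)
    have inj2: "inj (\<lambda>j::nat. g [^] (j + n))"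
      using inj unfolding inj_def by (metis add_right_cancel)
    have fT2: "finite {j::nat. g [^] (j + n) \<in> T}"
      using finite_vimageI[OF T inj2] by (simp add: vimage_def)
    obtain j where j: "j \<notin> {j::nat. g [^] j \<in> T} \<union> {j::nat. g [^] (j + n) \<in> T}"
      using infinite_UNIV_nat fT1 fT2 by (meson ex_new_if_finite finite_UnI)
    have e1: "g [^] j \<otimes> g [^] n = g [^] (j + n)" using g by (simp add: nat_pow_mult)
    have e2: "g [^] j \<otimes> g [^] n \<otimes> inv (g [^] j) = g [^] n"
    proof -
      have "g [^] j \<otimes> g [^] n = g [^] n \<otimes> g [^] j" using g
        by (simp add: nat_pow_mult add.commute)
      then show ?thesis using g by (simp add: m_assoc)
    qed
    show ?thesis using that[of "g [^] j" n] j n e1 e2 g by auto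
  qed
qed

lemma main_lemma:
  fixes G (structure) and A :: "'a set" and Z :: "('g \<Rightarrow> 'a) set"
  assumes G: "group G"
    and cases: "icc_group G \<or> torsion_free_group G"
    and sub: "subshift G A Z"
    and si: "strongly_irreducible G Z"
    and nc: "\<exists>z\<in>Z. \<exists>g\<in>carrier G. \<exists>h\<in>carrier G. z g \<noteq> z h"
    and g: "g \<in> carrier G" "g \<noteq> \<one>"
  shows "(subtopology (full_shift_top G A) Z) interior_of {z\<in>Z. shift_act G g z = z} = {}"
proof (rule ccontr)
  interpret group G by (rule G)
  assume "\<not> ?thesis"
  then obtain z0 where "z0 \<in> (subtopology (full_shift_top G A) Z) interior_of {z\<in>Z. shift_act G g z = z}"
    by blast
  then obtain F where F: "finite F" "F \<subseteq> carrier G" "z0 \<in> Z"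
    and FS: "\<And>x. x \<in> Z \<Longrightarrow> (\<forall>f\<in>F. x f = z0 f) \<Longrightarrow> x \<in> {z\<in>Z. shift_act G g z = z}"
    using cyl_lemma[OF sub] by blast
  have pw: "x (k \<otimes> g [^] n) = x k" if "x \<in> Z" "\<forall>f\<in>F. x f = z0 f" "k \<in> carrier G" for x k and n :: nat
  proof -
    have sx: "shift_act G g x = x" using FS that by blast
    have step: "x (k' \<otimes> g) = x k'" if "k' \<in> carrier G" for k'
      using fun_cong[OF sx, of k'] that by (simp add: shift_act_def)
    show ?thesis
    proof (induction n)
      case 0 then show ?case using that by simp
    next
      case (Suc n)
      have "x (k \<otimes> g [^] Suc n) = x (k \<otimes> g [^] n \<otimes> g)"
        using g that by (simp add: m_assoc)
      also have "\<dots> = x (k \<otimes> g [^] n)" using step g that by simp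
      finally show ?case using Suc by simp
    qed
  qed
  from si obtain D where DD: "finite D \<and> D \<subseteq> carrier G \<and>
       (\<forall>E1 E2. finite E1 \<and> finite E2 \<and> E1 \<subseteq> carrier G \<and> E2 \<subseteq> carrier G \<and>
          (D <#> E1) \<inter> (D <#> E2) = {} \<longrightarrow>
          (\<forall>z1\<in>Z. \<forall>z2\<in>Z. \<exists>x\<in>Z. (\<forall>h\<in>E1. x h = z1 h) \<and> (\<forall>h\<in>E2. x h = z2 h)))"
    unfolding strongly_irreducible_def by (rule exE)
  have D: "finite D" "D \<subseteq> carrier G" using DD by simp_all
  have SI: "\<forall>E1 E2. finite E1 \<and> finite E2 \<and> E1 \<subseteq> carrier G \<and> E2 \<subseteq> carrier G \<and>
          (D <#> E1) \<inter> (D <#> E2) = {} \<longrightarrow>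
          (\<forall>z1\<in>Z. \<forall>z2\<in>Z. \<exists>x\<in>Z. (\<forall>h\<in>E1. x h = z1 h) \<and> (\<forall>h\<in>E2. x h = z2 h))"
    using DD by (rule conjunct2[OF conjunct2])
  define S0 where "S0 = (\<lambda>(d1,d2). inv d2 \<otimes> d1) ` (D \<times> D)"
  define T0 where "T0 = (\<lambda>((d1,d2),f). inv d2 \<otimes> d1 \<otimes> f) ` ((D \<times> D) \<times> F)"
  have fS: "finite S0" unfolding S0_def using D by (intro finite_imageI finite_cartesian_product)
  have fT: "finite T0" unfolding T0_def using D F by (intro finite_imageI finite_cartesian_product)
  have TC: "T0 \<subseteq> carrier G" using D F by (auto simp: T0_def)
  obtain h n where hn: "h \<in> carrier G" "h \<otimes> g [^] (n::nat) \<otimes> inv h \<notin> S0" "h \<notin> T0"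
    "h \<otimes> g [^] n \<notin> T0"
    using exists_hm[OF G cases g fS fT TC] by blast
  have m: "g [^] n \<in> carrier G" using g by simp
  have sep: "(D <#> {h}) \<inter> (D <#> {h \<otimes> g [^] n}) = {}"
    "(D <#> F) \<inter> (D <#> {h, h \<otimes> g [^] n}) = {}"
    using sep_lemma[OF G D(2) F(2) hn(1) m hn(2)[unfolded S0_def] hn(3)[unfolded T0_def]
      hn(4)[unfolded T0_def]] by blast+
  obtain z1 a b where z1: "z1 \<in> Z" "a \<in> carrier G" "b \<in> carrier G" "z1 a \<noteq> z1 b"
    using nc by blast
  have ZA: "Z \<subseteq> (\<Pi>\<^sub>E h\<in>carrier G. A)" and inv: "\<forall>g\<in>carrier G. \<forall>z\<in>Z. shift_act G g z \<in> Z"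
    using sub by (auto simp: subshift_def)
  show False
    by (rule core_lemma[OF G ZA inv D(2) SI F(1,2) F(3) _ z1 hn(1) m sep])
       (rule pw, assumption+, rule hn(1))
qed

theorem proposition5p5:
  fixes G :: "('g, 'm) monoid_scheme" and A :: "'a set" and Z :: "('g \<Rightarrow> 'a) set"
  assumes "group G"
    and "countable (carrier G)"
    and "icc_group G \<or> torsion_free_group G"
    and "finite A"
    and "subshift G A Z"
    and "strongly_irreducible G Z"
    and "\<exists>z\<in>Z. \<exists>g\<in>carrier G. \<exists>h\<in>carrier G. z g \<noteq> z h"
  shows "essentially_free G A Z"
  unfolding essentially_free_def
  using main_lemma[OF assms(1) assms(3) assms(5) assms(6) assms(7)] by blast

end
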